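(* For every fixed $\mathcal R>0$, the diversity order $$d=-\lim_{\gamma_T\to\infty}\frac{\log P_{out}^{IR}(M)}{\log\gamma_T}$$ exists and equals $M$; equivalently $P_{out}^{IR}(M)=c(\gamma_T)\gamma_T^{-M}$ with $\lim_{\gamma_T\to\infty}\log c(\gamma_T)/\log\gamma_T=0$.
   Context: Fix $M\ge 1$, $\sigma_1,\dots,\sigma_M>0$ and real $\lambda_1,\dots,\lambda_M$ with $|\lambda_k|<1$ (so that the pairwise power correlation coefficients $\rho_{k,l}=\lambda_k^2\lambda_l^2$ are $<1$). Let ${}_0F_1(;1;z)=\sum_{n\ge0} z^n/(n!)^2$. The random vector $(|h_1|,\dots,|h_M|)$ has joint PDF on $[0,\infty)^M$ $$f(x_1,\dots,x_M)=\prod_{k=1}^M\frac{1}{\sigma_k^2(1-\lambda_k^2)}\int_0^\infty e^{-\left(1+\sum_{k=1}^M\frac{\lambda_k^2}{1-\lambda_k^2}\right)t}\prod_{k=1}^M x_k\,e^{-\frac{x_k^2}{2\sigma_k^2(1-\lambda_k^2)}}\,{}_0F_1\!\left(;1;\frac{x_k^2\lambda_k^2 t}{2\sigma_k^2(1-\lambda_k^2)^2}\right)dt .$$ For a transmit SNR $\gamma_T>0$ set $\gamma_l=\gamma_T|h_l|^2$ and define the outage probability $P_{out}^{IR}(M)=\Pr\big(\sum_{l=1}^M\log_2(1+\gamma_l)<\mathcal R\big)$ (a function of $\gamma_T$). *)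

theory Defs
  imports "HOL-Analysis.Analysis"
begin

definition hyp0F1_1 :: "real \<Rightarrow> real" where
  "hyp0F1_1 z = (\<Sum>n. z ^ n / (fact n)^2)"

text \<open>Joint PDF of (|h_1|,...,|h_M|); indices k range over {..<M}
  (k = 0..M-1 corresponds to the paper's 1..M).\<close>
definition jpdf :: "nat \<Rightarrow> (nat \<Rightarrow> real) \<Rightarrow> (nat \<Rightarrow> real) \<Rightarrow> (nat \<Rightarrow> real) \<Rightarrow> real" where
  "jpdf M \<sigma> lam x =
     (\<Prod>k<M. 1 / ((\<sigma> k)^2 * (1 - (lam k)^2))) *
     (\<integral>t\<in>{0..}.
        exp (- (1 + (\<Sum>k<M. (lam k)^2 / (1 - (lam k)^2))) * t) *
        (\<Prod>k<M. x k * exp (- ((x k)^2 / (2 * (\<sigma> k)^2 * (1 - (lam k)^2)))) *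
            hyp0F1_1 ((x k)^2 * (lam k)^2 * t / (2 * (\<sigma> k)^2 * (1 - (lam k)^2)^2)))
      \<partial>lborel)"

definition outage_set :: "nat \<Rightarrow> real \<Rightarrow> real \<Rightarrow> (nat \<Rightarrow> real) set" where
  "outage_set M R \<gamma>T = {x. (\<forall>k<M. 0 \<le> x k) \<and> (\<Sum>l<M. log 2 (1 + \<gamma>T * (x l)^2)) < R}"

definition P_out_IR :: "nat \<Rightarrow> (nat \<Rightarrow> real) \<Rightarrow> (nat \<Rightarrow> real) \<Rightarrow> real \<Rightarrow> real \<Rightarrow> real" where
  "P_out_IR M \<sigma> lam R \<gamma>T =
     (\<integral>x\<in>outage_set M R \<gamma>T. jpdf M \<sigma> lam x \<partial>(PiM {..<M} (\<lambda>_. lborel)))"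

end

theory Submission
  imports Defs
begin

lemma hyp_summable: "summable (\<lambda>n. z ^ n / (fact n)^2 :: real)"
proof (rule summable_comparison_test'[where g="\<lambda>n. \<bar>z\<bar>^n / fact n" and N=0])
  show "summable (\<lambda>n. \<bar>z\<bar>^n / fact n)" using summable_exp[of "\<bar>z\<bar>"] by (simp add: divide_inverse mult.commute)
next
  fix n :: nat
    have f1: "(1::real) \<le> fact n" by simp
    have "\<bar>z\<bar> ^ n / (fact n)^2 \<le> \<bar>z\<bar> ^ n / fact n"
      using f1 by (intro divide_left_mono) (auto simp: power2_eq_square)
    thus "norm (z ^ n / (fact n)^2) \<le> \<bar>z\<bar> ^ n / fact n"
      by (simp add: power_abs abs_mult)
qed

lemma hyp_ge1: "z \<ge> 0 \<Longrightarrow> 1 \<le> hyp0F1_1 z"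
  unfolding hyp0F1_1_def
  using sum_le_suminf[OF hyp_summable, of "{..<1}" z] by auto

lemma hyp_le_exp: "z \<ge> 0 \<Longrightarrow> hyp0F1_1 z \<le> exp z"
  unfolding hyp0F1_1_def
proof (rule sums_le[OF _ summable_sums[OF hyp_summable]])
  show "(\<lambda>n. z ^ n /\<^sub>R fact n) sums exp z" by (rule exp_converges)
  fix n :: nat assume "z \<ge> 0"
  have f1: "(1::real) \<le> fact n" by simp
  show "z ^ n / (fact n)\<^sup>2 \<le> z ^ n /\<^sub>R fact n"
    using f1 \<open>z\<ge>0\<close> by (auto simp: power2_eq_square divide_simps intro!: mult_left_mono[of 1 "fact n" "z^n", simplified])
qed

lemma hyp_meas[measurable]: "hyp0F1_1 \<in> borel_measurable borel"
  unfolding hyp0F1_1_def[abs_def] by measurable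

lemma jpdf_meas: "jpdf M \<sigma> lam \<in> borel_measurable (PiM {..<M} (\<lambda>_. lborel))"
  unfolding jpdf_def[abs_def] set_lebesgue_integral_def by measurable

lemma outage_meas: "Measurable.pred (PiM {..<M} (\<lambda>_. lborel)) (\<lambda>x. x \<in> outage_set M R g)"
  unfolding outage_set_def by measurable

lemma exp_int:
  assumes a: "a > 0"
  shows "set_integrable lborel {0..} (\<lambda>t::real. exp (-a*t))"
    "(LINT t:{0..}|lborel. exp (-a*t)) = 1/a"
proof -
  have hi: "((\<lambda>t::real. exp (-a*t)) has_integral 1/a) {0..}"
    using has_integral_exp_minus_to_infinity[OF a, of 0] by simp
  have "(\<lambda>t::real. exp (-a*t)) absolutely_integrable_on {0..}"
    using hi by (intro nonnegative_absolutely_integrable_1) (auto simp: integrable_on_def)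
  then have "integrable lebesgue (\<lambda>t. indicator {0..} t *\<^sub>R exp (-a*t))"
    unfolding set_integrable_def .
  then show si: "set_integrable lborel {0..} (\<lambda>t::real. exp (-a*t))"
    unfolding set_integrable_def
    by (subst (asm) integrable_completion) auto
  show "(LINT t:{0..}|lborel. exp (-a*t)) = 1/a"
    using set_borel_integral_eq_integral(2)[OF si] hi by (simp add: integral_unique)
qed

lemma jpdf_bounds:
  fixes M :: nat and \<sigma> lam :: "nat \<Rightarrow> real"
  assumes sp: "\<And>k. k < M \<Longrightarrow> \<sigma> k > 0"
    and lp: "\<And>k. k < M \<Longrightarrow> \<bar>lam k\<bar> < 1"
  shows "\<exists>\<epsilon>>0. \<exists>c>0. \<exists>C. \<forall>x. (\<forall>k<M. 0 \<le> x k \<and> x k \<le> \<epsilon>) \<longrightarrow>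
           c * (\<Prod>k<M. x k) \<le> jpdf M \<sigma> lam x \<and> jpdf M \<sigma> lam x \<le> C * (\<Prod>k<M. x k)"
proof -
  have l2: "\<And>k. k < M \<Longrightarrow> 1 - (lam k)^2 > 0"
  proof -
    fix k assume "k < M"
    hence "\<bar>lam k\<bar> < 1" by (rule lp)
    hence "\<bar>lam k\<bar>^2 < 1^2" by (intro power_strict_mono) auto
    thus "1 - (lam k)^2 > 0" by simp
  qed
  define A where "A = 1 + (\<Sum>k<M. (lam k)^2 / (1 - (lam k)^2))"
  define K where "K = (\<Sum>k<M. (lam k)^2 / (2 * (\<sigma> k)^2 * (1 - (lam k)^2)^2))"
  define \<epsilon> where "\<epsilon> = 1 / sqrt (2*K+2)"
  define P0 where "P0 = (\<Prod>k<M. 1 / ((\<sigma> k)^2 * (1 - (lam k)^2)))"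
  define m where "m = (\<Prod>k<M. exp (- (1 / (2 * (\<sigma> k)^2 * (1 - (lam k)^2)))))"
  have A1: "A \<ge> 1" unfolding A_def
  proof -
    have "(\<Sum>k<M. (lam k)^2 / (1 - (lam k)^2)) \<ge> 0"
      by (rule sum_nonneg) (use l2 in \<open>auto intro!: divide_nonneg_pos\<close>)
    thus "1 + (\<Sum>k<M. (lam k)^2 / (1 - (lam k)^2)) \<ge> 1" by simp
  qed
  have K0: "K \<ge> 0" unfolding K_def using l2 by (auto intro!: sum_nonneg)
  have eps2: "\<epsilon>^2 = 1/(2*K+2)" unfolding \<epsilon>_def using K0 by (simp add: power_divide)
  have epsK: "\<epsilon>^2 * K \<le> 1/2" unfolding eps2 using K0 by (simp add: field_simps)
  have epspos: "\<epsilon> > 0" unfolding \<epsilon>_def using K0 by simp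
  have eps1: "\<epsilon> \<le> 1"
  proof -
    have "\<epsilon>^2 \<le> 1^2" unfolding eps2 using K0 by (simp add: field_simps)
    thus ?thesis using epspos by (simp add: power_le_one_iff abs_le_square_iff)
  qed
  have sl: "(\<sigma> k)^2 * (1 - (lam k)^2) > 0" if "k < M" for k
    using l2[OF that] sp[OF that] by simp
  have P0pos: "P0 > 0" unfolding P0_def using sl by (auto intro!: prod_pos)
  have mpos: "m > 0" unfolding m_def by (auto intro!: prod_pos)
  define f where "f x t = exp (- A * t) *
        (\<Prod>k<M. x k * exp (- ((x k)^2 / (2 * (\<sigma> k)^2 * (1 - (lam k)^2)))) *
            hyp0F1_1 ((x k)^2 * (lam k)^2 * t / (2 * (\<sigma> k)^2 * (1 - (lam k)^2)^2)))" for x :: "nat \<Rightarrow> real" and t :: real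
  have jeq: "jpdf M \<sigma> lam x = P0 * (LINT t:{0..}|lborel. f x t)" for x
    unfolding jpdf_def P0_def f_def A_def by simp
  have fmeas: "f x \<in> borel_measurable lborel" for x unfolding f_def by measurable
  have bnds: "exp (-A*t) * (m * (\<Prod>k<M. x k)) \<le> f x t \<and> f x t \<le> exp (-(1/2)*t) * (\<Prod>k<M. x k)"
    if x: "\<forall>k<M. 0 \<le> x k \<and> x k \<le> \<epsilon>" and t: "t \<ge> 0" for x t
  proof -
    define z where "z k = (x k)^2 * (lam k)^2 * t / (2 * (\<sigma> k)^2 * (1 - (lam k)^2)^2)" for k
    have z0: "z k \<ge> 0" if "k < M" for k unfolding z_def using t l2[OF that] by auto
    have zle: "z k \<le> \<epsilon>^2 * ((lam k)^2 / (2 * (\<sigma> k)^2 * (1 - (lam k)^2)^2)) * t" if k: "k < M" for k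
    proof -
      have "(x k)^2 \<le> \<epsilon>^2" using x k by (intro power_mono) auto
      moreover have q: "(lam k)^2 * t / (2 * (\<sigma> k)^2 * (1 - (lam k)^2)^2) \<ge> 0"
        using t by simp
      ultimately have "(x k)^2 * ((lam k)^2 * t / (2 * (\<sigma> k)^2 * (1 - (lam k)^2)^2))
          \<le> \<epsilon>^2 * ((lam k)^2 * t / (2 * (\<sigma> k)^2 * (1 - (lam k)^2)^2))"
        by (rule mult_right_mono)
      thus ?thesis unfolding z_def by (simp add: mult.assoc)
    qed
    have sumz: "(\<Sum>k<M. z k) \<le> t/2"
    proof -
      have "(\<Sum>k<M. z k) \<le> (\<Sum>k<M. \<epsilon>^2 * ((lam k)^2 / (2 * (\<sigma> k)^2 * (1 - (lam k)^2)^2)) * t)"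
        by (rule sum_mono) (rule zle, simp)
      also have "\<dots> = \<epsilon>^2 * K * t" unfolding K_def by (simp add: sum_distrib_left sum_distrib_right)
      also have "\<dots> \<le> (1/2) * t" using epsK t by (intro mult_right_mono) auto
      finally show ?thesis by simp
    qed
    have e1: "exp (- ((x k)^2 / (2 * (\<sigma> k)^2 * (1 - (lam k)^2)))) \<le> 1" if k: "k < M" for k
      using l2[OF k] by auto
    have h1: "1 \<le> hyp0F1_1 (z k)" "hyp0F1_1 (z k) \<le> exp (z k)" if k: "k < M" for k
      using z0[OF k] hyp_ge1 hyp_le_exp by auto
    have xk: "0 \<le> x k" "x k \<le> 1" if k: "k < M" for k using x k eps1 by auto
    have up: "(\<Prod>k<M. x k * exp (- ((x k)^2 / (2 * (\<sigma> k)^2 * (1 - (lam k)^2)))) * hyp0F1_1 (z k))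
            \<le> (\<Prod>k<M. x k * exp (z k))"
    proof (intro prod_mono conjI)
      fix k assume k: "k \<in> {..<M}"
      show "0 \<le> x k * exp (- ((x k)^2 / (2 * (\<sigma> k)^2 * (1 - (lam k)^2)))) * hyp0F1_1 (z k)"
        using xk[of k] h1[of k] k by auto
    next
      fix k assume k: "k \<in> {..<M}"
      have "exp (- ((x k)^2 / (2 * (\<sigma> k)^2 * (1 - (lam k)^2)))) * hyp0F1_1 (z k) \<le> 1 * exp (z k)"
        using e1[of k] h1[of k] k by (intro mult_mono) auto
      thus "x k * exp (- ((x k)^2 / (2 * (\<sigma> k)^2 * (1 - (lam k)^2)))) * hyp0F1_1 (z k) \<le> x k * exp (z k)"
        using xk[of k] k by (simp add: mult.assoc mult_left_mono)
    qed
    have "(\<Prod>k<M. x k * exp (z k)) = (\<Prod>k<M. x k) * exp (\<Sum>k<M. z k)"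
      by (simp add: prod.distrib exp_sum)
    also have "\<dots> \<le> (\<Prod>k<M. x k) * exp (t/2)"
      using sumz x by (intro mult_left_mono prod_nonneg) auto
    finally have up2: "(\<Prod>k<M. x k * exp (- ((x k)^2 / (2 * (\<sigma> k)^2 * (1 - (lam k)^2)))) * hyp0F1_1 (z k))
            \<le> (\<Prod>k<M. x k) * exp (t/2)" using up by linarith
    have lo: "(\<Prod>k<M. x k * exp (- (1 / (2 * (\<sigma> k)^2 * (1 - (lam k)^2)))))
       \<le> (\<Prod>k<M. x k * exp (- ((x k)^2 / (2 * (\<sigma> k)^2 * (1 - (lam k)^2)))) * hyp0F1_1 (z k))"
    proof (intro prod_mono conjI)
      fix k assume k: "k \<in> {..<M}"
      show "0 \<le> x k * exp (- (1 / (2 * (\<sigma> k)^2 * (1 - (lam k)^2))))" using xk[of k] k by auto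
    next
      fix k assume k: "k \<in> {..<M}"
      have x21: "(x k)^2 \<le> 1" using xk[of k] k by (simp add: power_le_one)
      have d: "2 * (\<sigma> k)^2 * (1 - (lam k)^2) > 0" using sl[of k] k by auto
      have e1: "exp (- (1 / (2 * (\<sigma> k)^2 * (1 - (lam k)^2)))) \<le> exp (- ((x k)^2 / (2 * (\<sigma> k)^2 * (1 - (lam k)^2))))"
        using x21 d by (simp add: divide_right_mono)
      have "exp (- (1 / (2 * (\<sigma> k)^2 * (1 - (lam k)^2)))) * 1 \<le> exp (- ((x k)^2 / (2 * (\<sigma> k)^2 * (1 - (lam k)^2)))) * hyp0F1_1 (z k)"
        using e1 h1[of k] k by (intro mult_mono) auto
      thus "x k * exp (- (1 / (2 * (\<sigma> k)^2 * (1 - (lam k)^2)))) \<le> x k * exp (- ((x k)^2 / (2 * (\<sigma> k)^2 * (1 - (lam k)^2)))) * hyp0F1_1 (z k)"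
        using xk[of k] k by (simp add: mult.assoc mult_left_mono)
    qed
    have lo2: "m * (\<Prod>k<M. x k) = (\<Prod>k<M. x k * exp (- (1 / (2 * (\<sigma> k)^2 * (1 - (lam k)^2)))))"
      unfolding m_def by (simp add: prod.distrib mult.commute)
    have fz: "f x t = exp (- A * t) * (\<Prod>k<M. x k * exp (- ((x k)^2 / (2 * (\<sigma> k)^2 * (1 - (lam k)^2)))) * hyp0F1_1 (z k))"
      unfolding f_def z_def by simp
    have "f x t \<le> exp (- A * t) * ((\<Prod>k<M. x k) * exp (t/2))"
      unfolding fz using up2 by (intro mult_left_mono) auto
    also have "\<dots> = exp (- A * t + t/2) * (\<Prod>k<M. x k)" by (simp add: exp_add[symmetric])
    also have "\<dots> \<le> exp (-(1/2)*t) * (\<Prod>k<M. x k)"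
      using A1 t x mult_right_mono[OF A1 t] by (intro mult_right_mono prod_nonneg) auto
    finally have U: "f x t \<le> exp (-(1/2)*t) * (\<Prod>k<M. x k)" .
    have L: "exp (-A*t) * (m * (\<Prod>k<M. x k)) \<le> f x t"
      unfolding fz lo2 using lo by (intro mult_left_mono) auto
    show ?thesis using U L by simp
  qed
  have cpos: "P0 * (m / A) > 0" using P0pos mpos A1 by auto
  have "\<forall>x. (\<forall>k<M. 0 \<le> x k \<and> x k \<le> \<epsilon>) \<longrightarrow>
           P0 * (m / A) * (\<Prod>k<M. x k) \<le> jpdf M \<sigma> lam x \<and> jpdf M \<sigma> lam x \<le> 2 * P0 * (\<Prod>k<M. x k)"
  proof (intro allI impI conjI)
    fix x :: "nat \<Rightarrow> real" assume x: "\<forall>k<M. 0 \<le> x k \<and> x k \<le> \<epsilon>"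
    have px: "(\<Prod>k<M. x k) \<ge> 0" using x by (auto intro!: prod_nonneg)
    have iU: "set_integrable lborel {0..} (\<lambda>t. exp (-(1/2)*t) * (\<Prod>k<M. x k))"
      using exp_int(1)[of "1/2"] by (intro set_integrable_mult_left) auto
    have iL: "set_integrable lborel {0..} (\<lambda>t. exp (-A*t) * (m * (\<Prod>k<M. x k)))"
      using exp_int(1)[of A] A1 by (intro set_integrable_mult_left) auto
    have iF: "set_integrable lborel {0..} (f x)"
    proof (rule set_integrable_bound[OF iU])
      show "set_borel_measurable lborel {0..} (f x)"
        unfolding set_borel_measurable_def using fmeas[of x] by measurable
      show "AE t in lborel. t \<in> {0..} \<longrightarrow> norm (f x t) \<le> norm (exp (-(1/2)*t) * (\<Prod>k<M. x k))"
      proof (rule AE_I2, rule impI)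
        fix t :: real assume t: "t \<in> {0..}"
        have "exp (-A*t) * (m * (\<Prod>k<M. x k)) \<ge> 0" using mpos px by auto
        thus "norm (f x t) \<le> norm (exp (-(1/2)*t) * (\<Prod>k<M. x k))"
          using bnds[OF x, of t] t px by auto
      qed
    qed
    have "(LINT t:{0..}|lborel. f x t) \<le> (LINT t:{0..}|lborel. exp (-(1/2)*t) * (\<Prod>k<M. x k))"
      using bnds[OF x] by (intro set_integral_mono[OF iF iU]) auto
    also have "\<dots> = 2 * (\<Prod>k<M. x k)"
      using exp_int(2)[of "1/2"] by (simp add: set_integral_mult_left)
    finally have U: "(LINT t:{0..}|lborel. f x t) \<le> 2 * (\<Prod>k<M. x k)" .
    have "(m / A) * (\<Prod>k<M. x k) = (LINT t:{0..}|lborel. exp (-A*t) * (m * (\<Prod>k<M. x k)))"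
      using exp_int(2)[of A] A1 by (simp add: set_integral_mult_left)
    also have "\<dots> \<le> (LINT t:{0..}|lborel. f x t)"
      using bnds[OF x] by (intro set_integral_mono[OF iL iF]) auto
    finally have L: "(m / A) * (\<Prod>k<M. x k) \<le> (LINT t:{0..}|lborel. f x t)" .
    show "P0 * (m / A) * (\<Prod>k<M. x k) \<le> jpdf M \<sigma> lam x"
      unfolding jeq using mult_left_mono[OF L, of P0] P0pos by (simp add: mult.assoc)
    show "jpdf M \<sigma> lam x \<le> 2 * P0 * (\<Prod>k<M. x k)"
      unfolding jeq using U P0pos by (simp add: mult_left_mono mult.commute mult.left_commute)
  qed
  thus ?thesis using cpos epspos by blast
qed

definition boxs :: "nat \<Rightarrow> real \<Rightarrow> (nat \<Rightarrow> real) set" where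
  "boxs M s = {x. \<forall>k<M. 0 \<le> x k \<and> x k \<le> s}"

lemma box_int:
  assumes s: "s \<ge> 0"
  shows "integrable (PiM {..<M} (\<lambda>_. lborel)) (\<lambda>x. indicator (boxs M s) x * (\<Prod>k<M. x k))"
    "(\<integral>x. indicator (boxs M s) x * (\<Prod>k<M. x k) \<partial>PiM {..<M} (\<lambda>_. lborel)) = (s^2/2)^M"
proof -
  interpret product_sigma_finite "\<lambda>_::nat. lborel :: real measure" by standard
  have eq: "indicator (boxs M s) x * (\<Prod>k<M. x k) = (\<Prod>k<M. x k * indicator {0..s} (x k))" for x :: "nat \<Rightarrow> real"
    by (auto simp: boxs_def indicator_def prod.distrib[symmetric] intro: prod_zero)
  have i1: "integrable lborel (\<lambda>t::real. t * indicator {0..s} t)"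
    by (rule borel_integrable_atLeastAtMost) auto
  have v1: "(\<integral>t. t * indicator {0..s} t \<partial>lborel) = s^2/2"
    using integral_power[of 0 s 1] s by (simp add: power2_eq_square)
  show "integrable (PiM {..<M} (\<lambda>_. lborel)) (\<lambda>x. indicator (boxs M s) x * (\<Prod>k<M. x k))"
    unfolding eq using product_integrable_prod[of "{..<M}" "\<lambda>_ t. t * indicator {0..s} t"] i1 by simp
  show "(\<integral>x. indicator (boxs M s) x * (\<Prod>k<M. x k) \<partial>PiM {..<M} (\<lambda>_. lborel)) = (s^2/2)^M"
    unfolding eq using product_integral_prod[of "{..<M}" "\<lambda>_ t. t * indicator {0..s} t"] i1 v1 by simp
qed

lemma limit_from_bounds:
  fixes P :: "real \<Rightarrow> real" and L U gz :: real
  assumes L: "L > 0" and b: "\<And>g. g \<ge> gz \<Longrightarrow> L / g^M \<le> P g \<and> P g \<le> U / g^M"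
  shows "((\<lambda>g. - ln (P g) / ln g) \<longlongrightarrow> real M) at_top"
proof (rule tendsto_sandwich[where f="\<lambda>g. real M - ln U / ln g" and h="\<lambda>g. real M - ln L / ln g"])
  have lninf: "LIM g at_top. ln (g::real) :> at_infinity"
    by (rule filterlim_at_top_imp_at_infinity[OF ln_at_top])
  show "((\<lambda>g. real M - ln U / ln g) \<longlongrightarrow> real M) at_top"
    using tendsto_diff[OF tendsto_const tendsto_divide_0[OF tendsto_const lninf], of "real M" "ln U"] by simp
  show "((\<lambda>g. real M - ln L / ln g) \<longlongrightarrow> real M) at_top"
    using tendsto_diff[OF tendsto_const tendsto_divide_0[OF tendsto_const lninf], of "real M" "ln L"] by simp
  have ev: "\<forall>\<^sub>F g in at_top. g \<ge> max gz 2" by (rule eventually_ge_at_top)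
  have key: "real M - ln U / ln g \<le> - ln (P g) / ln g \<and> - ln (P g) / ln g \<le> real M - ln L / ln g"
    if g: "g \<ge> max gz 2" for g
  proof -
    have g1: "g > 1" using g by auto
    have lg: "ln g > 0" using g1 by simp
    have gM: "g^M > 0" using g1 by simp
    have b1: "L / g^M \<le> P g" "P g \<le> U / g^M" using b[of g] g by auto
    have Pp: "P g > 0" using b1(1) divide_pos_pos[OF L gM] by linarith
    have Up: "U > 0"
    proof (rule ccontr)
      assume "\<not> U > 0" hence "U / g^M \<le> 0" using gM by (simp add: divide_nonpos_pos)
      thus False using b1(2) Pp by linarith
    qed
    have l1: "ln (L / g^M) \<le> ln (P g)" using b1(1) L gM Pp by (subst ln_le_cancel_iff) auto
    have l2: "ln (P g) \<le> ln (U / g^M)" using b1(2) Pp by (subst ln_le_cancel_iff) auto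
    have eL: "ln (L / g^M) = ln L - real M * ln g" using L gM g1 by (simp add: ln_div ln_realpow)
    have eU: "ln (U / g^M) = ln U - real M * ln g" using Up gM g1 by (simp add: ln_div ln_realpow)
    have "- ln (P g) / ln g \<le> (real M * ln g - ln L) / ln g"
      using l1 eL lg by (intro divide_right_mono) auto
    also have "\<dots> = real M - ln L / ln g" using lg by (simp add: field_simps)
    finally have A: "- ln (P g) / ln g \<le> real M - ln L / ln g" .
    have "real M - ln U / ln g = (real M * ln g - ln U) / ln g" using lg by (simp add: field_simps)
    also have "\<dots> \<le> - ln (P g) / ln g"
      using l2 eU lg by (intro divide_right_mono) auto
    finally show ?thesis using A by simp
  qed
  show "\<forall>\<^sub>F g in at_top. real M - ln U / ln g \<le> - ln (P g) / ln g"
    using ev by eventually_elim (use key in blast)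
  show "\<forall>\<^sub>F g in at_top. - ln (P g) / ln g \<le> real M - ln L / ln g"
    using ev by eventually_elim (use key in blast)
qed

theorem mainTheorem12:
  fixes M :: nat and \<sigma> lam :: "nat \<Rightarrow> real" and R :: real
  assumes "M \<ge> 1"
    and "\<And>k. k < M \<Longrightarrow> \<sigma> k > 0"
    and "\<And>k. k < M \<Longrightarrow> \<bar>lam k\<bar> < 1"
    and "R > 0"
  shows "((\<lambda>\<gamma>T. - ln (P_out_IR M \<sigma> lam R \<gamma>T) / ln \<gamma>T) \<longlongrightarrow> real M) at_top"
proof -
  note M1 = assms(1) and Rp = assms(4)
  obtain \<epsilon> c C0 where ep: "\<epsilon> > 0" and cp: "c > 0" and bd:
    "\<And>x. (\<forall>k<M. 0 \<le> x k \<and> x k \<le> \<epsilon>) \<Longrightarrow>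
       c * (\<Prod>k<M. x k) \<le> jpdf M \<sigma> lam x \<and> jpdf M \<sigma> lam x \<le> C0 * (\<Prod>k<M. x k)"
    using jpdf_bounds[of M \<sigma> lam, OF assms(2) assms(3)] by blast
  define C where "C = max C0 0"
  have C0: "C \<ge> 0" unfolding C_def by simp
  have bd': "c * (\<Prod>k<M. x k) \<le> jpdf M \<sigma> lam x \<and> jpdf M \<sigma> lam x \<le> C * (\<Prod>k<M. x k)"
    if x: "\<forall>k<M. 0 \<le> x k \<and> x k \<le> \<epsilon>" for x
  proof -
    have "(\<Prod>k<M. x k) \<ge> 0" using x by (auto intro!: prod_nonneg)
    hence "C0 * (\<Prod>k<M. x k) \<le> C * (\<Prod>k<M. x k)" unfolding C_def by (intro mult_right_mono) auto
    thus ?thesis using bd[OF x] by linarith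
  qed
  define \<alpha> where "\<alpha> = 2 powr (R / (2 * real M)) - 1"
  define \<beta> where "\<beta> = 2 powr R - 1"
  have ap: "\<alpha> > 0" unfolding \<alpha>_def using Rp M1 by simp
  have bp: "\<beta> > 0" unfolding \<beta>_def using Rp by simp
  define N where "N = PiM {..<M} (\<lambda>_. lborel :: real measure)"
  have bounds: "c * (\<alpha>/g/2)^M \<le> P_out_IR M \<sigma> lam R g \<and> P_out_IR M \<sigma> lam R g \<le> C * (\<beta>/g/2)^M"
    if g: "g \<ge> max 1 (\<beta> / \<epsilon>^2)" for g
  proof -
    have gp: "g > 0" using g by auto
    define sl where "sl = sqrt (\<alpha>/g)"
    define su where "su = sqrt (\<beta>/g)"
    have sl0: "sl \<ge> 0" "sl^2 = \<alpha>/g" unfolding sl_def using ap gp by auto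
    have su0: "su \<ge> 0" "su^2 = \<beta>/g" unfolding su_def using bp gp by auto
    have sue: "su \<le> \<epsilon>"
    proof -
      have "\<beta> / \<epsilon>^2 \<le> g" using g by auto
      hence "\<beta> \<le> g * \<epsilon>^2" using ep by (simp add: field_simps)
      hence "\<beta>/g \<le> \<epsilon>^2" using gp by (simp add: field_simps)
      hence "su^2 \<le> \<epsilon>^2" using su0 by simp
      thus ?thesis using power2_le_imp_le[of su \<epsilon>] ep by linarith
    qed
    define S where "S = outage_set M R g"
    have sub1: "boxs M sl \<subseteq> S"
    proof
      fix x assume x: "x \<in> boxs M sl"
      have t: "log 2 (1 + g * (x l)^2) \<le> R / (2 * real M)" if l: "l < M" for l
      proof -
        have "(x l)^2 \<le> sl^2" using x l by (auto simp: boxs_def intro!: power_mono)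
        hence "g * (x l)^2 \<le> \<alpha>" using sl0 gp by (simp add: field_simps)
        hence "log 2 (1 + g * (x l)^2) \<le> log 2 (1 + \<alpha>)"
        proof -
          have "g * (x l)^2 \<ge> 0" using gp by simp
          thus ?thesis using \<open>g * (x l)^2 \<le> \<alpha>\<close> by (intro log_mono) auto
        qed
        also have "\<dots> = R / (2 * real M)" unfolding \<alpha>_def by simp
        finally show ?thesis .
      qed
      have "(\<Sum>l<M. log 2 (1 + g * (x l)^2)) \<le> (\<Sum>l<M. R / (2 * real M))"
        by (rule sum_mono) (use t in auto)
      also have "\<dots> = R/2" using M1 by simp
      also have "\<dots> < R" using Rp by simp
      finally show "x \<in> S" using x unfolding S_def outage_set_def boxs_def by auto
    qed
    have sub2: "S \<subseteq> boxs M su"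
    proof
      fix x assume x: "x \<in> S"
      have nn: "\<forall>k<M. 0 \<le> x k" and sm: "(\<Sum>l<M. log 2 (1 + g * (x l)^2)) < R"
        using x unfolding S_def outage_set_def by auto
      have "x k \<le> su" if k: "k < M" for k
      proof -
        have tnn: "log 2 (1 + g * (x l)^2) \<ge> 0" for l
        proof -
          have "g * (x l)^2 \<ge> 0" using gp by simp
          thus ?thesis by (subst zero_le_log_cancel_iff) auto
        qed
        have "log 2 (1 + g * (x k)^2) \<le> (\<Sum>l<M. log 2 (1 + g * (x l)^2))"
          using k tnn by (intro member_le_sum) auto
        hence "log 2 (1 + g * (x k)^2) < R" using sm by linarith
        hence "1 + g * (x k)^2 < 2 powr R" using gp
          by (subst (asm) log_less_iff) (auto simp: add_pos_nonneg)
        hence "g * (x k)^2 < \<beta>" unfolding \<beta>_def by simp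
        hence "g * (x k)^2 \<le> g * su^2" using su0 gp by simp
        hence "(x k)^2 \<le> su^2" using gp by simp
        thus ?thesis using power2_le_imp_le[of "x k" su] su0 by linarith
      qed
      thus "x \<in> boxs M su" using nn unfolding boxs_def by auto
    qed
    have inE: "\<forall>k<M. 0 \<le> x k \<and> x k \<le> \<epsilon>" if "x \<in> S" for x
    proof -
      have "x \<in> boxs M su" using sub2 that by blast
      hence "\<forall>k<M. 0 \<le> x k \<and> x k \<le> su" unfolding boxs_def by simp
      thus ?thesis using sue by force
    qed
    have Pdef: "P_out_IR M \<sigma> lam R g = (\<integral>x. indicator S x * jpdf M \<sigma> lam x \<partial>N)"
      unfolding P_out_IR_def set_lebesgue_integral_def S_def N_def by simp
    have measF: "(\<lambda>x. indicator S x * jpdf M \<sigma> lam x) \<in> borel_measurable N"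
    proof -
      have "indicator S \<in> borel_measurable N"
        unfolding N_def S_def using outage_meas[of M R g] by (simp add: pred_def borel_measurable_indicator)
      moreover have "jpdf M \<sigma> lam \<in> borel_measurable N" unfolding N_def by (rule jpdf_meas)
      ultimately show ?thesis by (rule borel_measurable_times)
    qed
    have iu: "integrable N (\<lambda>x. C * (indicator (boxs M su) x * (\<Prod>k<M. x k)))"
      unfolding N_def using box_int(1)[OF su0(1)] by simp
    have il: "integrable N (\<lambda>x. c * (indicator (boxs M sl) x * (\<Prod>k<M. x k)))"
      unfolding N_def using box_int(1)[OF sl0(1)] by simp
    have ptU: "indicator S x * jpdf M \<sigma> lam x \<le> C * (indicator (boxs M su) x * (\<Prod>k<M. x k))
               \<and> 0 \<le> indicator S x * jpdf M \<sigma> lam x" for x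
    proof (cases "x \<in> S")
      case True
      then have "x \<in> boxs M su" using sub2 by auto
      moreover have p0: "(\<Prod>k<M. x k) \<ge> 0" using inE[OF True] by (auto intro!: prod_nonneg)
      moreover have "c * (\<Prod>k<M. x k) \<ge> 0" using cp p0 by simp
      ultimately show ?thesis using bd'[OF inE[OF True]] True by simp
    next
      case False
      have "0 \<le> C * (indicator (boxs M su) x * (\<Prod>k<M. x k))"
      proof (cases "x \<in> boxs M su")
        case True
        hence "(\<Prod>k<M. x k) \<ge> 0" unfolding boxs_def by (auto intro!: prod_nonneg)
        thus ?thesis using C0 True by simp
      qed simp
      thus ?thesis using False by simp
    qed
    have iF: "integrable N (\<lambda>x. indicator S x * jpdf M \<sigma> lam x)"
    proof (rule Bochner_Integration.integrable_bound[OF iu measF AE_I2])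
      fix x
      show "norm (indicator S x * jpdf M \<sigma> lam x) \<le> norm (C * (indicator (boxs M su) x * (\<Prod>k<M. x k)))"
        using ptU[of x] by simp
    qed
    have "P_out_IR M \<sigma> lam R g \<le> (\<integral>x. C * (indicator (boxs M su) x * (\<Prod>k<M. x k)) \<partial>N)"
      unfolding Pdef using ptU by (intro integral_mono[OF iF iu]) auto
    also have "\<dots> = C * (\<beta>/g/2)^M"
      using box_int(2)[OF su0(1)] su0(2) unfolding N_def by simp
    finally have U: "P_out_IR M \<sigma> lam R g \<le> C * (\<beta>/g/2)^M" .
    have ptL: "c * (indicator (boxs M sl) x * (\<Prod>k<M. x k)) \<le> indicator S x * jpdf M \<sigma> lam x" for x
    proof (cases "x \<in> boxs M sl")
      case True
      then have xs: "x \<in> S" using sub1 by auto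
      show ?thesis using bd'[OF inE[OF xs]] True xs by simp
    next
      case False
      thus ?thesis using ptU[of x] by simp
    qed
    have "c * (\<alpha>/g/2)^M = (\<integral>x. c * (indicator (boxs M sl) x * (\<Prod>k<M. x k)) \<partial>N)"
      using box_int(2)[OF sl0(1)] sl0(2) unfolding N_def by simp
    also have "\<dots> \<le> P_out_IR M \<sigma> lam R g"
      unfolding Pdef using ptL by (intro integral_mono[OF il iF]) auto
    finally show ?thesis using U by simp
  qed
  show ?thesis
  proof (rule limit_from_bounds[where L="c * (\<alpha>/2)^M" and U="C * (\<beta>/2)^M" and gz="max 1 (\<beta> / \<epsilon>^2)"])
    show "c * (\<alpha>/2)^M > 0" using cp ap by simp
    fix g :: real assume g: "g \<ge> max 1 (\<beta> / \<epsilon>^2)"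
    hence gp: "g > 0" by auto
    have "(\<alpha>/g/2)^M = (\<alpha>/2)^M / g^M" "(\<beta>/g/2)^M = (\<beta>/2)^M / g^M"
      by (simp_all add: power_divide field_simps)
    thus "c * (\<alpha>/2)^M / g^M \<le> P_out_IR M \<sigma> lam R g \<and> P_out_IR M \<sigma> lam R g \<le> C * (\<beta>/2)^M / g^M"
      using bounds[OF g] by (simp add: times_divide_eq_right)
  qed
qed

end
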